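(* Let $t_1,\dots,t_N\in\mathbb{C}$ be pairwise distinct, $B_1,\dots,B_N$ constant complex $M\times M$ matrices, $y$ a $\mathbb{C}^M$-valued solution of $D_xy=\sum_{i=1}^N\frac{B_i}{x-t_i}y$, and $Y_0={}^{\mathrm T}\!\left[\frac{y}{x-t_1},\dots,\frac{y}{x-t_N}\right]$. Let $\lambda\in\mathbb{C}$ and let $C$ be a path such that the Jackson integrals involved converge and $$\left[\frac{1-q^{-\lambda}t/x}{1-t/x}\,(tI-S)\,Y_0(t)\,\frac{(q^{1-\lambda}t/x)_\infty}{(qt/x)_\infty}\right]_{t\in\partial C}=0 .$$ Then $Y=E_{\lambda;C}[Y_0](x)$ (applied componentwise) satisfies $$(xI-S)D_xY=\big(q^\lambda B+[\lambda]I\big)Y,$$ and consequently $D_xY=\sum_{i=1}^N\frac{G_i}{x-t_i}Y$, where $G_i$ is the $MN\times MN$ matrix whose $i$-th block row is $[q^\lambda B_1,\dots,q^\lambda B_{i-1},\,q^\lambda B_i+[\lambda]I_M,\,q^\lambda B_{i+1},\dots,q^\lambda B_N]$ and whose other block rows are zero.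
   Context: Fix $q\in\mathbb{C}$ with $0<|q|<1$. $T_xf(x)=f(qx)$, $D_xf(x)=\frac{f(x)-f(qx)}{(1-q)x}$, $(a)_\infty=\prod_{k\ge0}(1-aq^k)$, $[\lambda]=\frac{1-q^\lambda}{1-q}$; $x^\lambda$ is a fixed branch with $T_xx^\lambda=q^\lambda x^\lambda$. $S=\mathrm{diag}(t_1I_M,\dots,t_NI_M)$; $B$ is the $MN\times MN$ block matrix all of whose block rows equal $[B_1\ \cdots\ B_N]$. Jackson integrals: $\int_0^\tau f\,d_qt=(1-q)\sum_{n\ge0}f(\tau q^n)\tau q^n$, $\int_0^{\tau\infty}f\,d_qt=(1-q)\sum_{n\in\mathbb{Z}}f(\tau q^n)\tau q^n$, $\int_{[\tau_1,\tau_2]}=\int_{[0,\tau_2]}-\int_{[0,\tau_1]}$ for $\tau_i\in\mathbb{C}\cup\mathbb{C}\infty$; a path $C$ is a formal linear combination of such intervals, integrals extended linearly. $[F(t)]_{t\in\partial[\tau_1,\tau_2]}=F(\tau_2)-F(\tau_1)$, extended linearly to paths, with $F(\tau\infty)=\lim_{n\to-\infty}F(\tau q^n)$ and $F(0)=\lim_{n\to\infty}F(\tau q^n)$. $E_{\lambda;C}[f](x)=x^\lambda\int_Cf(t)\frac{(q^{1-\lambda}t/x)_\infty}{(qt/x)_\infty}d_qt$. *)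

theory Defs
  imports "HOL-Analysis.Infinite_Products" "Jordan_Normal_Form.Matrix"
begin

definition qpoch :: "complex \<Rightarrow> complex \<Rightarrow> complex" where
  "qpoch q a = prodinf (\<lambda>k. 1 - a * q ^ k)"

text \<open>Endpoints: Fin tau stands for tau in C, Inf tau stands for tau\<infinity> (in C\<infinity>).
  A path is a formal finite linear combination  sum_j c_j [0, e_j]  of basic intervals;
  since [tau1,tau2] = [0,tau2] - [0,tau1], every formal combination of intervals is of this form.\<close>
datatype endpt = Fin complex | Inf complex

type_synonym qpath = "(complex \<times> endpt) list"

fun endpt_base :: "endpt \<Rightarrow> complex" where
  "endpt_base (Fin \<tau>) = \<tau>"
| "endpt_base (Inf \<tau>) = \<tau>"

text \<open>The q-lattice on which the Jackson integral over [0,e] samples its integrand.\<close>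
fun qlattice :: "complex \<Rightarrow> endpt \<Rightarrow> complex set" where
  "qlattice q (Fin \<tau>) = range (\<lambda>n::nat. \<tau> * q ^ n)"
| "qlattice q (Inf \<tau>) = range (\<lambda>n::int. \<tau> * q powi n)"

text \<open>Convergence of the Jackson integral over [0,e]; the bilateral sum over Z converges
  iff both the sum over n >= 0 and the sum over n < 0 converge.\<close>
fun jconv :: "complex \<Rightarrow> (complex \<Rightarrow> complex) \<Rightarrow> endpt \<Rightarrow> bool" where
  "jconv q f (Fin \<tau>) = summable (\<lambda>n. f (\<tau> * q ^ n) * (\<tau> * q ^ n))"
| "jconv q f (Inf \<tau>) = (summable (\<lambda>n. f (\<tau> * q ^ n) * (\<tau> * q ^ n)) \<and>
      summable (\<lambda>n. f (\<tau> / q ^ Suc n) * (\<tau> / q ^ Suc n)))"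

fun jint :: "complex \<Rightarrow> (complex \<Rightarrow> complex) \<Rightarrow> endpt \<Rightarrow> complex" where
  "jint q f (Fin \<tau>) = (1 - q) * (\<Sum>n. f (\<tau> * q ^ n) * (\<tau> * q ^ n))"
| "jint q f (Inf \<tau>) = (1 - q) * ((\<Sum>n. f (\<tau> * q ^ n) * (\<tau> * q ^ n)) +
      (\<Sum>n. f (\<tau> / q ^ Suc n) * (\<tau> / q ^ Suc n)))"

definition jconvP :: "complex \<Rightarrow> (complex \<Rightarrow> complex) \<Rightarrow> qpath \<Rightarrow> bool" where
  "jconvP q f C = (\<forall>(c, e) \<in> set C. jconv q f e)"

definition jintP :: "complex \<Rightarrow> (complex \<Rightarrow> complex) \<Rightarrow> qpath \<Rightarrow> complex" where
  "jintP q f C = (\<Sum>(c, e) \<leftarrow> C. c * jint q f e)"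

text \<open>[F]_{d[0,tau]} = F(tau) - F(0),  [F]_{d[0,tau\<infinity>]} = F(tau\<infinity>) - F(0), where
  F(tau\<infinity>) = lim_{n -> -\<infinity>} F(tau q^n) and F(0) = lim_{n -> \<infinity>} F(tau q^n).\<close>
fun bdefined :: "complex \<Rightarrow> (complex \<Rightarrow> complex) \<Rightarrow> endpt \<Rightarrow> bool" where
  "bdefined q F (Fin \<tau>) = convergent (\<lambda>n. F (\<tau> * q ^ n))"
| "bdefined q F (Inf \<tau>) = (convergent (\<lambda>n. F (\<tau> * q ^ n)) \<and> convergent (\<lambda>n. F (\<tau> / q ^ n)))"

fun bval :: "complex \<Rightarrow> (complex \<Rightarrow> complex) \<Rightarrow> endpt \<Rightarrow> complex" where
  "bval q F (Fin \<tau>) = F \<tau> - lim (\<lambda>n. F (\<tau> * q ^ n))"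
| "bval q F (Inf \<tau>) = lim (\<lambda>n. F (\<tau> / q ^ n)) - lim (\<lambda>n. F (\<tau> * q ^ n))"

definition bdefP :: "complex \<Rightarrow> (complex \<Rightarrow> complex) \<Rightarrow> qpath \<Rightarrow> bool" where
  "bdefP q F C = (\<forall>(c, e) \<in> set C. bdefined q F e)"

definition bdryP :: "complex \<Rightarrow> (complex \<Rightarrow> complex) \<Rightarrow> qpath \<Rightarrow> complex" where
  "bdryP q F C = (\<Sum>(c, e) \<leftarrow> C. c * bval q F e)"

text \<open>qlam stands for the fixed value q^lambda, so q^{1-lambda} = q / qlam;
  xl is the fixed branch of x^lambda.\<close>
definition qPhi :: "complex \<Rightarrow> complex \<Rightarrow> complex \<Rightarrow> complex \<Rightarrow> complex" where
  "qPhi q qlam t x = qpoch q ((q / qlam) * t / x) / qpoch q (q * t / x)"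

definition qEuler :: "complex \<Rightarrow> complex \<Rightarrow> (complex \<Rightarrow> complex) \<Rightarrow> qpath
    \<Rightarrow> (complex \<Rightarrow> complex) \<Rightarrow> complex \<Rightarrow> complex" where
  "qEuler q qlam xl C f x = xl x * jintP q (\<lambda>t. f t * qPhi q qlam t x) C"

definition Smat :: "nat \<Rightarrow> nat \<Rightarrow> (nat \<Rightarrow> complex) \<Rightarrow> complex mat" where
  "Smat M N t = mat (M * N) (M * N) (\<lambda>(r, c). if r = c then t (r div M) else 0)"

definition Bbig :: "nat \<Rightarrow> nat \<Rightarrow> (nat \<Rightarrow> complex mat) \<Rightarrow> complex mat" where
  "Bbig M N B = mat (M * N) (M * N) (\<lambda>(r, c). B (c div M) $$ (r mod M, c mod M))"

definition Gmat :: "nat \<Rightarrow> nat \<Rightarrow> (nat \<Rightarrow> complex mat) \<Rightarrow> complex \<Rightarrow> complex \<Rightarrow> nat \<Rightarrow> complex mat" where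
  "Gmat M N B qlam lamb i = mat (M * N) (M * N) (\<lambda>(r, c).
      if r div M = i then qlam * B (c div M) $$ (r mod M, c mod M) + (if r = c then lamb else 0)
      else 0)"

definition Y0vec :: "nat \<Rightarrow> nat \<Rightarrow> (nat \<Rightarrow> complex) \<Rightarrow> (complex \<Rightarrow> complex vec) \<Rightarrow> complex \<Rightarrow> complex vec" where
  "Y0vec M N t y s = vec (M * N) (\<lambda>j. y s $ (j mod M) / (s - t (j div M)))"

end

theory Submission
  imports Defs
begin

lemma qpoch_rec:
  assumes "cmod q < 1"
  shows "qpoch q a = (1 - a) * qpoch q (q * a)"
proof -
  have "summable (\<lambda>i. norm ((1 - a * q ^ i) - 1))"
    using assms by (simp add: norm_mult norm_power summable_mult summable_geometric)
  then have "abs_convergent_prod (\<lambda>i. 1 - a * q ^ i)"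
    by (rule summable_imp_abs_convergent_prod)
  then have c: "convergent_prod (\<lambda>i. 1 - a * q ^ i)"
    by (rule abs_convergent_prod_imp_convergent_prod)
  from has_prod_ignore_initial_segment'[OF c, of 1]
  have "(\<lambda>i. 1 - a * q ^ i) has_prod ((1 - a) * (\<Prod>k. 1 - a * q ^ (k + 1)))" by simp
  then have "qpoch q a = (1 - a) * (\<Prod>k. 1 - a * q ^ (k + 1))"
    unfolding qpoch_def by (rule has_prod_unique[symmetric])
  also have "(\<lambda>k. 1 - a * q ^ (k + 1)) = (\<lambda>k. 1 - q * a * q ^ k)"
    by (auto simp: algebra_simps)
  finally show ?thesis unfolding qpoch_def by simp
qed

lemma qpoch_nz_facts:
  assumes "cmod q < 1" "qpoch q (s / x) \<noteq> 0"
  shows "1 - s / x \<noteq> 0" "1 - q * s / x \<noteq> 0" "qpoch q (q * s / x) \<noteq> 0"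
    "qpoch q (q * (q * s / x)) \<noteq> 0"
proof -
  have e1: "qpoch q (s / x) = (1 - s / x) * qpoch q (q * s / x)"
    using qpoch_rec[OF assms(1), of "s / x"] by simp
  have e2: "qpoch q (q * s / x) = (1 - q * s / x) * qpoch q (q * (q * s / x))"
    using qpoch_rec[OF assms(1), of "q * s / x"] by simp
  show "1 - s / x \<noteq> 0" "qpoch q (q * s / x) \<noteq> 0" using e1 assms(2) by auto
  then show "1 - q * s / x \<noteq> 0" "qpoch q (q * (q * s / x)) \<noteq> 0" using e2 by auto
qed

lemma phi_qx:
  assumes "cmod q < 1" "q \<noteq> 0" "x \<noteq> 0" "qlam \<noteq> 0" "qpoch q (s / x) \<noteq> 0"
  shows "qPhi q qlam s (q * x) = qPhi q qlam s x * ((1 - s / (qlam * x)) / (1 - s / x))"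
proof -
  note nz = qpoch_nz_facts[OF assms(1,5)]
  have a: "qpoch q (q / qlam * s / (q * x)) = (1 - s / (qlam * x)) * qpoch q (q / qlam * s / x)"
    using qpoch_rec[OF assms(1), of "s / (qlam * x)"] assms(2)
    by (simp add: field_simps)
  have b: "qpoch q (q * s / (q * x)) = (1 - s / x) * qpoch q (q * s / x)"
    using qpoch_rec[OF assms(1), of "s / x"] assms(2) by simp
  show ?thesis unfolding qPhi_def a b using nz by (simp add: field_simps)
qed

lemma phi_qs:
  assumes "cmod q < 1" "qpoch q (s / x) \<noteq> 0"
  shows "qPhi q qlam (q * s) x * ((1 - q * s / (qlam * x)) / (1 - q * s / x)) = qPhi q qlam s x"
proof -
  note nz = qpoch_nz_facts[OF assms(1,2)]
  have a: "qpoch q (q / qlam * s / x) = (1 - q * s / (qlam * x)) * qpoch q (q / qlam * (q * s) / x)"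
    using qpoch_rec[OF assms(1), of "q / qlam * s / x"]
    by (simp add: field_simps)
  have b: "qpoch q (q * s / x) = (1 - q * s / x) * qpoch q (q * (q * s) / x)"
    using qpoch_rec[OF assms(1), of "q * s / x"] by (simp add: field_simps)
  show ?thesis unfolding qPhi_def a b using nz by (simp add: field_simps)
qed

lemma mat_mult_vec_nth:
  assumes "i < n" "dim_vec v = n"
  shows "(mat n n f *\<^sub>v v) $ i = (\<Sum>c<n. f (i, c) * v $ c)"
  using assms by (simp add: mult_mat_vec_def scalar_prod_def atLeast0LessThan)

lemma sI_minus_S:
  "s \<cdot>\<^sub>m 1\<^sub>m (M * N) - Smat M N t = mat (M * N) (M * N) (\<lambda>(r, c). if r = c then s - t (r div M) else 0)"
  by (rule eq_matI) (auto simp: Smat_def)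

lemma qB_plus:
  "qlam \<cdot>\<^sub>m Bbig M N B + lamb \<cdot>\<^sub>m 1\<^sub>m (M * N) = mat (M * N) (M * N)
     (\<lambda>(r, c). qlam * B (c div M) $$ (r mod M, c mod M) + (if r = c then lamb else 0))"
  by (rule eq_matI) (auto simp: Bbig_def)

lemma sum_div_mod:
  fixes g :: "nat \<Rightarrow> nat \<Rightarrow> 'a::comm_monoid_add"
  shows "(\<Sum>c<M * N. g (c div M) (c mod M)) = (\<Sum>i<N. \<Sum>m<M. g i m)"
proof (induction N)
  case 0 then show ?case by simp
next
  case (Suc N)
  have "(\<Sum>c<M * Suc N. g (c div M) (c mod M)) = (\<Sum>c\<in>{0..<M * N}. g (c div M) (c mod M)) + (\<Sum>c\<in>{M * N..<M * N + M}. g (c div M) (c mod M))"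
    by (simp add: sum.atLeastLessThan_concat lessThan_atLeast0 algebra_simps)
  also have "(\<Sum>c\<in>{M * N..<M * N + M}. g (c div M) (c mod M)) = (\<Sum>m\<in>{0..<M}. g ((m + M * N) div M) ((m + M * N) mod M))"
    using sum.shift_bounds_nat_ivl[of "\<lambda>c. g (c div M) (c mod M)" 0 "M * N" M] by (simp add: add.commute)
  also have "\<dots> = (\<Sum>m<M. g N m)"
    by (rule sum.cong) auto
  finally show ?case using Suc by (simp add: lessThan_atLeast0)
qed

lemma sums_identity:
  fixes g1 g2 T :: "nat \<Rightarrow> complex" and h :: "nat \<Rightarrow> nat \<Rightarrow> complex"
  assumes "summable g1" "summable g2" "\<forall>c<K. summable (h c)" "T sums Tot"
    and "\<forall>n. A * (g1 n - qlam * g2 n) = qlam * (\<Sum>c<K. w c * h c n) + lamb * g1 n - qlam * T n"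
  shows "A * (suminf g1 - qlam * suminf g2) = qlam * (\<Sum>c<K. w c * suminf (h c)) + lamb * suminf g1 - qlam * Tot"
proof -
  have l: "(\<lambda>n. A * (g1 n - qlam * g2 n)) sums (A * (suminf g1 - qlam * suminf g2))"
    using assms(1,2) by (intro sums_mult sums_diff summable_sums) auto
  have "(\<lambda>n. \<Sum>c<K. w c * h c n) sums (\<Sum>c<K. w c * suminf (h c))"
    using assms(3) by (intro sums_sum sums_mult summable_sums) auto
  then have r: "(\<lambda>n. qlam * (\<Sum>c<K. w c * h c n) + lamb * g1 n - qlam * T n) sums
     (qlam * (\<Sum>c<K. w c * suminf (h c)) + lamb * suminf g1 - qlam * Tot)"
    using assms(1,4) by (intro sums_mult sums_diff sums_add summable_sums) auto
  have e: "(\<lambda>n. A * (g1 n - qlam * g2 n)) = (\<lambda>n. qlam * (\<Sum>c<K. w c * h c n) + lamb * g1 n - qlam * T n)"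
    using assms(5) by blast
  from l r show ?thesis unfolding e by (rule sums_unique2)
qed

lemma pt_inst:
  fixes g1 g2 T :: complex and h :: "nat \<Rightarrow> complex"
  assumes "A * ((1 - q) * g1 - qlam * ((1 - q) * g2)) = qlam * (\<Sum>c<K. w c * ((1 - q) * h c)) + lamb * ((1 - q) * g1) - qlam * T"
  shows "(A * (1 - q)) * (g1 - qlam * g2) = qlam * (\<Sum>c<K. (w c * (1 - q)) * h c) + (lamb * (1 - q)) * g1 - qlam * T"
proof -
  have "(\<Sum>c<K. (w c * (1 - q)) * h c) = (\<Sum>c<K. w c * ((1 - q) * h c))"
    by (simp add: mult.assoc)
  then show ?thesis using assms by (simp add: algebra_simps)
qed

lemma endpoint_half:
  fixes f1 f2 F :: "complex \<Rightarrow> complex" and fc :: "nat \<Rightarrow> complex \<Rightarrow> complex" and p :: "nat \<Rightarrow> complex"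
  assumes "summable (\<lambda>n. f1 (p n) * p n)" "summable (\<lambda>n. f2 (p n) * p n)" "\<forall>c<K. summable (\<lambda>n. fc c (p n) * p n)"
    and T: "(\<lambda>n. F (p n) - F (q * p n)) sums Tot"
    and pt: "\<forall>n. A * ((1 - q) * (f1 (p n) * p n) - qlam * ((1 - q) * (f2 (p n) * p n)))
       = qlam * (\<Sum>c<K. w c * ((1 - q) * (fc c (p n) * p n))) + lamb * ((1 - q) * (f1 (p n) * p n)) - qlam * (F (p n) - F (q * p n))"
  shows "A * ((1 - q) * (\<Sum>n. f1 (p n) * p n) - qlam * ((1 - q) * (\<Sum>n. f2 (p n) * p n)))
     = qlam * (\<Sum>c<K. w c * ((1 - q) * (\<Sum>n. fc c (p n) * p n))) + lamb * ((1 - q) * (\<Sum>n. f1 (p n) * p n)) - qlam * Tot"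
proof -
  have "(A * (1 - q)) * ((\<Sum>n. f1 (p n) * p n) - qlam * (\<Sum>n. f2 (p n) * p n))
     = qlam * (\<Sum>c<K. (w c * (1 - q)) * (\<Sum>n. fc c (p n) * p n)) + (lamb * (1 - q)) * (\<Sum>n. f1 (p n) * p n) - qlam * Tot"
    using assms(1-3) T by (rule sums_identity) (intro allI pt_inst, use pt in blast)
  moreover have "(\<Sum>c<K. (w c * (1 - q)) * (\<Sum>n. fc c (p n) * p n)) = (\<Sum>c<K. w c * ((1 - q) * (\<Sum>n. fc c (p n) * p n)))"
    by (simp add: mult.assoc)
  ultimately show ?thesis by (simp add: algebra_simps)
qed

lemma comb:
  fixes A q qlam lamb a1 a2 b1 b2 X Y T1 T2 :: complex
  assumes "A * ((1 - q) * a1 - qlam * ((1 - q) * a2)) = qlam * X + lamb * ((1 - q) * a1) - qlam * T1"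
    "A * ((1 - q) * b1 - qlam * ((1 - q) * b2)) = qlam * Y + lamb * ((1 - q) * b1) - qlam * T2"
  shows "A * (((1 - q) * a1 + (1 - q) * b1) - qlam * ((1 - q) * a2 + (1 - q) * b2)) = qlam * (X + Y) + lamb * ((1 - q) * a1 + (1 - q) * b1) - qlam * (T1 + T2)"
proof -
  have "A * (((1 - q) * a1 + (1 - q) * b1) - qlam * ((1 - q) * a2 + (1 - q) * b2)) =
     A * ((1 - q) * a1 - qlam * ((1 - q) * a2)) + A * ((1 - q) * b1 - qlam * ((1 - q) * b2))"
    by (simp add: algebra_simps)
  also have "\<dots> = (qlam * X + lamb * ((1 - q) * a1) - qlam * T1) + (qlam * Y + lamb * ((1 - q) * b1) - qlam * T2)"
    using assms by simp
  also have "\<dots> = qlam * (X + Y) + lamb * ((1 - q) * a1 + (1 - q) * b1) - qlam * (T1 + T2)"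
    by (simp add: algebra_simps)
  finally show ?thesis .
qed

lemma endpoint_identity:
  fixes f1 f2 F :: "complex \<Rightarrow> complex" and fc :: "nat \<Rightarrow> complex \<Rightarrow> complex"
  assumes "jconv q f1 e" "jconv q f2 e" "\<forall>c<K. jconv q (fc c) e" "bdefined q F e" "q \<noteq> 0"
    and pt: "\<forall>s\<in>qlattice q e. A * ((1 - q) * (f1 s * s) - qlam * ((1 - q) * (f2 s * s)))
       = qlam * (\<Sum>c<K. w c * ((1 - q) * (fc c s * s))) + lamb * ((1 - q) * (f1 s * s)) - qlam * (F s - F (q * s))"
  shows "A * (jint q f1 e - qlam * jint q f2 e) = qlam * (\<Sum>c<K. w c * jint q (fc c) e) + lamb * jint q f1 e - qlam * bval q F e"
proof (cases e)
  case (Fin \<tau>)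
  let ?p = "\<lambda>n::nat. \<tau> * q ^ n"
  have mem: "?p n \<in> qlattice q e" for n using Fin by auto
  have qp: "q * ?p n = ?p (Suc n)" for n by (simp add: algebra_simps)
  have F: "(\<lambda>n. F (?p n)) \<longlonglongrightarrow> lim (\<lambda>n. F (?p n))"
    using assms(4) Fin by (simp add: convergent_LIMSEQ_iff)
  have T: "(\<lambda>n. F (?p n) - F (q * ?p n)) sums (F \<tau> - lim (\<lambda>n. F (?p n)))"
    using telescope_sums'[OF F] unfolding qp by simp
  have "A * ((1 - q) * (\<Sum>n. f1 (?p n) * ?p n) - qlam * ((1 - q) * (\<Sum>n. f2 (?p n) * ?p n)))
     = qlam * (\<Sum>c<K. w c * ((1 - q) * (\<Sum>n. fc c (?p n) * ?p n))) + lamb * ((1 - q) * (\<Sum>n. f1 (?p n) * ?p n)) - qlam * (F \<tau> - lim (\<lambda>n. F (?p n)))"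
    apply (rule endpoint_half[OF _ _ _ T])
    using assms(1-3) Fin apply auto[3]
    using pt mem by blast
  then show ?thesis using Fin by simp
next
  case (Inf \<tau>)
  let ?p = "\<lambda>n::nat. \<tau> * q ^ n"
  let ?m = "\<lambda>n::nat. \<tau> / q ^ n"
  let ?m' = "\<lambda>n::nat. \<tau> / q ^ Suc n"
  have mem: "?p n \<in> qlattice q e" for n
    using Inf by (auto intro!: image_eqI[where x="int n"])
  have memm: "?m' n \<in> qlattice q e" for n
  proof -
    have "q powi (- int (Suc n)) = inverse (q ^ Suc n)"
      by (simp only: power_int_minus power_int_of_nat)
    then have "?m' n = \<tau> * q powi (- int (Suc n))" by (simp add: divide_inverse)
    then show ?thesis using Inf by auto
  qed
  have qp: "q * ?p n = ?p (Suc n)" for n by (simp add: algebra_simps)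
  have qm: "q * ?m' n = ?m n" for n using assms(5) by (simp add: field_simps)
  have F: "(\<lambda>n. F (?p n)) \<longlonglongrightarrow> lim (\<lambda>n. F (?p n))"
    using assms(4) Inf by (simp add: convergent_LIMSEQ_iff)
  have T: "(\<lambda>n. F (?p n) - F (q * ?p n)) sums (F \<tau> - lim (\<lambda>n. F (?p n)))"
    using telescope_sums'[OF F] unfolding qp by simp
  have Fm: "(\<lambda>n. F (?m n)) \<longlonglongrightarrow> lim (\<lambda>n. F (?m n))"
    using assms(4) Inf by (simp add: convergent_LIMSEQ_iff)
  have Tm: "(\<lambda>n. F (?m' n) - F (q * ?m' n)) sums (lim (\<lambda>n. F (?m n)) - F \<tau>)"
    using telescope_sums[OF Fm] unfolding qm by simp
  have P: "A * ((1 - q) * (\<Sum>n. f1 (?p n) * ?p n) - qlam * ((1 - q) * (\<Sum>n. f2 (?p n) * ?p n)))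
     = qlam * (\<Sum>c<K. w c * ((1 - q) * (\<Sum>n. fc c (?p n) * ?p n))) + lamb * ((1 - q) * (\<Sum>n. f1 (?p n) * ?p n)) - qlam * (F \<tau> - lim (\<lambda>n. F (?p n)))"
    apply (rule endpoint_half[OF _ _ _ T])
    using assms(1-3) Inf apply auto[3]
    using pt mem by blast
  have M: "A * ((1 - q) * (\<Sum>n. f1 (?m' n) * ?m' n) - qlam * ((1 - q) * (\<Sum>n. f2 (?m' n) * ?m' n)))
     = qlam * (\<Sum>c<K. w c * ((1 - q) * (\<Sum>n. fc c (?m' n) * ?m' n))) + lamb * ((1 - q) * (\<Sum>n. f1 (?m' n) * ?m' n)) - qlam * (lim (\<lambda>n. F (?m n)) - F \<tau>)"
    apply (rule endpoint_half[OF _ _ _ Tm])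
    using assms(1-3) Inf apply auto[3]
    using pt memm by blast
  have J: "jint q g e = (1 - q) * (\<Sum>n. g (?p n) * ?p n) + (1 - q) * (\<Sum>n. g (?m' n) * ?m' n)" for g
    unfolding Inf jint.simps by (rule distrib_left)
  have S: "(\<Sum>c<K. w c * jint q (fc c) e) = (\<Sum>c<K. w c * ((1 - q) * (\<Sum>n. fc c (?p n) * ?p n))) + (\<Sum>c<K. w c * ((1 - q) * (\<Sum>n. fc c (?m' n) * ?m' n)))"
    unfolding J by (simp add: sum.distrib distrib_left)
  have B: "bval q F e = (F \<tau> - lim (\<lambda>n. F (?p n))) + (lim (\<lambda>n. F (?m n)) - F \<tau>)"
    using Inf by simp
  show ?thesis unfolding S B J[of f1] J[of f2] by (rule comb[OF P M])
qed

lemma path_identity: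
  fixes J1 J2 bv :: "'e \<Rightarrow> complex" and Jc :: "nat \<Rightarrow> 'e \<Rightarrow> complex" and C :: "(complex \<times> 'e) list"
  assumes "\<forall>(c, e)\<in>set C. A * (J1 e - qlam * J2 e) = qlam * (\<Sum>k<K. w k * Jc k e) + lamb * J1 e - qlam * bv e"
  shows "A * ((\<Sum>(c, e)\<leftarrow>C. c * J1 e) - qlam * (\<Sum>(c, e)\<leftarrow>C. c * J2 e))
     = qlam * (\<Sum>k<K. w k * (\<Sum>(c, e)\<leftarrow>C. c * Jc k e)) + lamb * (\<Sum>(c, e)\<leftarrow>C. c * J1 e) - qlam * (\<Sum>(c, e)\<leftarrow>C. c * bv e)"
  using assms
proof (induction C)
  case Nil then show ?case by simp
next
  case (Cons a C)
  obtain c e where a: "a = (c, e)" by fastforce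
  have h: "A * (J1 e - qlam * J2 e) = qlam * (\<Sum>k<K. w k * Jc k e) + lamb * J1 e - qlam * bv e"
    using Cons.prems a by auto
  have ih: "A * ((\<Sum>(c, e)\<leftarrow>C. c * J1 e) - qlam * (\<Sum>(c, e)\<leftarrow>C. c * J2 e))
     = qlam * (\<Sum>k<K. w k * (\<Sum>(c, e)\<leftarrow>C. c * Jc k e)) + lamb * (\<Sum>(c, e)\<leftarrow>C. c * J1 e) - qlam * (\<Sum>(c, e)\<leftarrow>C. c * bv e)"
    using Cons by auto
  have s: "(\<Sum>k<K. w k * (c * Jc k e + X k)) = c * (\<Sum>k<K. w k * Jc k e) + (\<Sum>k<K. w k * X k)" for X
    by (simp add: algebra_simps sum.distrib sum_distrib_left)
  have h2: "c * (A * (J1 e - qlam * J2 e)) = c * (qlam * (\<Sum>k<K. w k * Jc k e) + lamb * J1 e - qlam * bv e)"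
    using h by simp
  have e: "(\<Sum>k<K. w k * (c * Jc k e + (\<Sum>(c, e)\<leftarrow>C. c * Jc k e))) = c * (\<Sum>k<K. w k * Jc k e) + (\<Sum>k<K. w k * (\<Sum>(c, e)\<leftarrow>C. c * Jc k e))"
    by (rule s)
  show ?case unfolding a
    by (simp only: list.map sum_list.Cons prod.case e) (use h2 ih in \<open>simp add: algebra_simps\<close>)
qed

lemma micro:
  fixes a Z c d x :: complex
  assumes "x \<noteq> 0"
  shows "a / x * Z * (c * x / d) = a * Z * c / d"
  using assms by (simp add: field_simps)

lemma micro1:
  fixes a b c k r x :: complex
  assumes "c \<noteq> 0" "x \<noteq> 0"
  shows "b / (c * x) * (c * a - k * (c * (a * r))) = b / x * a * (1 - k * r)"
  using assms by (simp add: field_simps)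

lemma core_alg0:
  fixes x s t0 q qlam yk yk' P \<rho> :: complex
  assumes "x \<noteq> 0" "s - t0 \<noteq> 0" "1 - q \<noteq> 0" "x - s \<noteq> 0"
    and e1: "1 - qlam * \<rho> = (1 - qlam) * x / (x - s)"
    and e2: "qlam * (1 - \<rho>) = (1 - qlam) * s / (x - s)"
  shows "(x - t0) / ((1 - q) * x) * ((1 - q) * (yk / (s - t0) * P * s)
          - qlam * ((1 - q) * (yk / (s - t0) * (P * \<rho>) * s)))
     = qlam * (P * (yk - yk')) + (1 - qlam) / (1 - q) * ((1 - q) * (yk / (s - t0) * P * s))
       - qlam * (\<rho> * yk * P - yk' * P)"
proof -
  have "(x - t0) / ((1 - q) * x) * ((1 - q) * (yk / (s - t0) * P * s)
          - qlam * ((1 - q) * (yk / (s - t0) * (P * \<rho>) * s)))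
      = (x - t0) / x * (yk / (s - t0) * P * s) * (1 - qlam * \<rho>)"
  proof -
    have eq: "yk / (s - t0) * (P * \<rho>) * s = (yk / (s - t0) * P * s) * \<rho>" by simp
    show ?thesis unfolding eq by (rule micro1[OF assms(3) assms(1)])
  qed
  also have "\<dots> = (x - t0) * (yk / (s - t0) * P * s) * (1 - qlam) / (x - s)"
    unfolding e1 using assms(1) by (rule micro)
  also have "\<dots> = P * yk * (qlam * (1 - \<rho>)) + (1 - qlam) * (yk * P * s / (s - t0))"
    unfolding e2 using assms(1-4) by (simp add: field_simps)
  also have "\<dots> = qlam * (P * (yk - yk')) + (1 - qlam) / (1 - q) * ((1 - q) * (yk / (s - t0) * P * s))
       - qlam * (\<rho> * yk * P - yk' * P)"
  proof -
    have c: "(1 - qlam) / (1 - q) * ((1 - q) * (yk / (s - t0) * P * s)) = (1 - qlam) * (yk * P * s / (s - t0))"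
      using assms(3) by simp
    show ?thesis unfolding c by (simp add: algebra_simps)
  qed
  finally show ?thesis .
qed

lemma core_alg:
  fixes x s t0 q qlam yk yk' P :: complex
  assumes "x \<noteq> 0" "s \<noteq> t0" "q \<noteq> 1" "1 - s / x \<noteq> 0" "qlam \<noteq> 0"
  shows "(x - t0) / ((1 - q) * x) * ((1 - q) * (yk / (s - t0) * P * s)
          - qlam * ((1 - q) * (yk / (s - t0) * (P * ((1 - s / (qlam * x)) / (1 - s / x))) * s)))
     = qlam * (P * (yk - yk')) + (1 - qlam) / (1 - q) * ((1 - q) * (yk / (s - t0) * P * s))
       - qlam * ((1 - s / (qlam * x)) / (1 - s / x) * yk * P - yk' * P)"
proof -
  have xs: "x - s \<noteq> 0" using assms(1,4) by (auto simp: field_simps)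
  have r: "(1 - s / (qlam * x)) / (1 - s / x) = (qlam * x - s) / (qlam * (x - s))"
    using assms(1,5) xs by (simp add: field_simps)
  show ?thesis unfolding r
    by (rule core_alg0) (use assms xs in \<open>auto simp: field_simps\<close>)
qed

lemma pointwise:
  fixes q qlam x s :: complex and M N j :: nat and t :: "nat \<Rightarrow> complex"
    and B :: "nat \<Rightarrow> complex mat" and y :: "complex \<Rightarrow> complex vec" and F :: "complex \<Rightarrow> complex"
  assumes q: "cmod q < 1" "q \<noteq> 0" and x: "x \<noteq> 0" and ql: "qlam \<noteq> 0"
    and j: "j < M * N"
    and B: "\<forall>i<N. B i \<in> carrier_mat M M" and ydim: "\<forall>s. dim_vec (y s) = M"
    and s_t: "\<forall>i<N. s \<noteq> t i" and qs_t: "\<forall>i<N. q * s \<noteq> t i" and s0: "s \<noteq> 0"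
    and qp: "qpoch q (s / x) \<noteq> 0"
    and ys: "\<forall>k<M. (y s $ k - y (q * s) $ k) / ((1 - q) * s) = (\<Sum>i<N. (B i *\<^sub>v y s) $ k / (s - t i))"
    and F_def: "F = (\<lambda>s. (1 - s / (qlam * x)) / (1 - s / x)
            * ((s \<cdot>\<^sub>m 1\<^sub>m (M * N) - Smat M N t) *\<^sub>v Y0vec M N t y s) $ j * qPhi q qlam s x)"
  shows "(x - t (j div M)) / ((1 - q) * x) * ((1 - q) * ((Y0vec M N t y s $ j * qPhi q qlam s x) * s)
           - qlam * ((1 - q) * ((Y0vec M N t y s $ j * qPhi q qlam s (q * x)) * s)))
    = qlam * (\<Sum>c<M * N. B (c div M) $$ (j mod M, c mod M) * ((1 - q) * ((Y0vec M N t y s $ c * qPhi q qlam s x) * s)))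
      + (1 - qlam) / (1 - q) * ((1 - q) * ((Y0vec M N t y s $ j * qPhi q qlam s x) * s))
      - qlam * (F s - F (q * s))"
proof -
  define k where "k = j mod M"
  define i0 where "i0 = j div M"
  have M0: "M > 0" using j by (cases M) auto
  have k: "k < M" unfolding k_def using M0 by simp
  have i0: "i0 < N" unfolding i0_def using j by (simp add: less_mult_imp_div_less mult.commute)
  have q1: "q \<noteq> 1" using q(1) by auto
  note nz = qpoch_nz_facts[OF q(1) qp]
  let ?P = "qPhi q qlam s x"
  let ?\<rho> = "(1 - s / (qlam * x)) / (1 - s / x)"
  have Y0: "Y0vec M N t y z $ c = y z $ (c mod M) / (z - t (c div M))" if "c < M * N" for z c
    using that unfolding Y0vec_def by simp
  have Bv: "(B i *\<^sub>v y s) $ k = (\<Sum>m<M. B i $$ (k, m) * y s $ m)" if "i < N" for i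
  proof -
    have "B i \<in> carrier_mat M M" using B that by auto
    then show ?thesis using k ydim by (simp add: mult_mat_vec_def scalar_prod_def atLeast0LessThan)
  qed
  have sumB: "(\<Sum>c<M * N. B (c div M) $$ (k, c mod M) * Y0vec M N t y s $ c)
      = (y s $ k - y (q * s) $ k) / ((1 - q) * s)"
  proof -
    have "(\<Sum>c<M * N. B (c div M) $$ (k, c mod M) * Y0vec M N t y s $ c)
        = (\<Sum>c<M * N. B (c div M) $$ (k, c mod M) * (y s $ (c mod M) / (s - t (c div M))))"
      by (rule sum.cong) (auto simp: Y0)
    also have "\<dots> = (\<Sum>i<N. \<Sum>m<M. B i $$ (k, m) * (y s $ m / (s - t i)))"
      by (rule sum_div_mod)
    also have "\<dots> = (\<Sum>i<N. (B i *\<^sub>v y s) $ k / (s - t i))"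
      by (rule sum.cong) (auto simp: Bv sum_divide_distrib)
    finally show ?thesis using ys k by simp
  qed
  have S1: "(\<Sum>c<M * N. B (c div M) $$ (j mod M, c mod M) * ((1 - q) * ((Y0vec M N t y s $ c * ?P) * s)))
      = ?P * (y s $ k - y (q * s) $ k)"
  proof -
    have "(\<Sum>c<M * N. B (c div M) $$ (j mod M, c mod M) * ((1 - q) * ((Y0vec M N t y s $ c * ?P) * s)))
       = ((1 - q) * ?P * s) * (\<Sum>c<M * N. B (c div M) $$ (k, c mod M) * Y0vec M N t y s $ c)"
      unfolding k_def sum_distrib_left by (rule sum.cong) (auto simp: algebra_simps)
    also have "\<dots> = ?P * (y s $ k - y (q * s) $ k)"
      unfolding sumB using q1 s0 by (simp add: field_simps)
    finally show ?thesis .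
  qed
  have Sv: "((z \<cdot>\<^sub>m 1\<^sub>m (M * N) - Smat M N t) *\<^sub>v Y0vec M N t y z) $ j = y z $ k"
    if "z \<noteq> t i0" for z
  proof -
    have "((z \<cdot>\<^sub>m 1\<^sub>m (M * N) - Smat M N t) *\<^sub>v Y0vec M N t y z) $ j
        = (\<Sum>c<M * N. (if j = c then z - t (j div M) else 0) * Y0vec M N t y z $ c)"
      unfolding sI_minus_S by (subst mat_mult_vec_nth[OF j]) (simp_all add: Y0vec_def)
    also have "\<dots> = (z - t i0) * Y0vec M N t y z $ j"
      using j unfolding i0_def by (simp add: if_distrib[of "\<lambda>a. a * _"] sum.delta cong: if_cong)
    also have "\<dots> = y z $ k" using that j unfolding Y0[OF j] k_def i0_def by simp
    finally show ?thesis .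
  qed
  have Fs: "F s = ?\<rho> * y s $ k * ?P"
    unfolding F_def using Sv s_t i0 by simp
  have Fqs: "F (q * s) = y (q * s) $ k * ?P"
  proof -
    have "F (q * s) = y (q * s) $ k * (qPhi q qlam (q * s) x * ((1 - q * s / (qlam * x)) / (1 - q * s / x)))"
      unfolding F_def using Sv qs_t i0 by simp
    then show ?thesis unfolding phi_qs[OF q(1) qp] .
  qed
  have f2: "qPhi q qlam s (q * x) = ?P * ?\<rho>" by (rule phi_qx[OF q(1) q(2) x ql qp])
  have Yj: "Y0vec M N t y s $ j = y s $ k / (s - t i0)"
    unfolding Y0[OF j] k_def i0_def ..
  show ?thesis
    unfolding S1 Fs Fqs f2 Yj i0_def[symmetric]
    by (rule core_alg) (use x s_t i0 q1 nz ql in auto)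
qed

lemma lattice_q:
  assumes "s \<in> qlattice q e" "q \<noteq> 0"
  shows "q * s \<in> qlattice q e"
proof (cases e)
  case (Fin \<tau>)
  then obtain n where "s = \<tau> * q ^ n" using assms by auto
  then have "q * s = \<tau> * q ^ Suc n" by simp
  then show ?thesis using Fin by (auto intro!: image_eqI[where x="Suc n"] simp del: power_Suc)
next
  case (Inf \<tau>)
  then obtain n where "s = \<tau> * q powi n" using assms by auto
  then have "q * s = \<tau> * q powi (n + 1)" using assms(2) by (simp add: power_int_add_1')
  then show ?thesis using Inf by (auto intro!: image_eqI[where x="n + 1"])
qed

lemma lattice_nz:
  assumes "s \<in> qlattice q e" "q \<noteq> 0" "endpt_base e \<noteq> 0"
  shows "s \<noteq> 0"
proof (cases e)
  case (Fin \<tau>)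
  then show ?thesis using assms by auto
next
  case (Inf \<tau>)
  then show ?thesis using assms by auto
qed

lemma rhs_entry:
  fixes v :: "complex vec"
  assumes "r < M * N" "dim_vec v = M * N"
  shows "((qlam \<cdot>\<^sub>m Bbig M N B + lamb \<cdot>\<^sub>m 1\<^sub>m (M * N)) *\<^sub>v v) $ r
     = qlam * (\<Sum>c<M * N. B (c div M) $$ (r mod M, c mod M) * v $ c) + lamb * v $ r"
proof -
  have "((qlam \<cdot>\<^sub>m Bbig M N B + lamb \<cdot>\<^sub>m 1\<^sub>m (M * N)) *\<^sub>v v) $ r
     = (\<Sum>c<M * N. (qlam * B (c div M) $$ (r mod M, c mod M) + (if r = c then lamb else 0)) * v $ c)"
    unfolding qB_plus by (subst mat_mult_vec_nth[OF assms]) simp_all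
  also have "\<dots> = (\<Sum>c<M * N. qlam * (B (c div M) $$ (r mod M, c mod M) * v $ c)) + (\<Sum>c<M * N. (if r = c then lamb * v $ c else 0))"
    by (subst sum.distrib[symmetric]) (rule sum.cong, auto simp: algebra_simps)
  also have "\<dots> = qlam * (\<Sum>c<M * N. B (c div M) $$ (r mod M, c mod M) * v $ c) + lamb * v $ r"
    using assms(1) by (simp add: sum_distrib_left sum.delta)
  finally show ?thesis .
qed

lemma G_entry:
  fixes v :: "complex vec"
  assumes "r < M * N" "dim_vec v = M * N"
  shows "(Gmat M N B qlam lamb i *\<^sub>v v) $ r
     = (if r div M = i then qlam * (\<Sum>c<M * N. B (c div M) $$ (r mod M, c mod M) * v $ c) + lamb * v $ r else 0)"
proof (cases "r div M = i")
  case True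
  have "(Gmat M N B qlam lamb i *\<^sub>v v) $ r
     = (\<Sum>c<M * N. (qlam * B (c div M) $$ (r mod M, c mod M) + (if r = c then lamb else 0)) * v $ c)"
    unfolding Gmat_def using True by (subst mat_mult_vec_nth[OF assms]) simp_all
  also have "\<dots> = (\<Sum>c<M * N. qlam * (B (c div M) $$ (r mod M, c mod M) * v $ c)) + (\<Sum>c<M * N. (if r = c then lamb * v $ c else 0))"
    by (subst sum.distrib[symmetric]) (rule sum.cong, auto simp: algebra_simps)
  also have "\<dots> = qlam * (\<Sum>c<M * N. B (c div M) $$ (r mod M, c mod M) * v $ c) + lamb * v $ r"
    using assms(1) by (simp add: sum_distrib_left sum.delta)
  finally show ?thesis using True by simp
next
  case False
  then show ?thesis unfolding Gmat_def by (subst mat_mult_vec_nth[OF assms]) simp_all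
qed

lemma lhs_entry:
  fixes v :: "complex vec"
  assumes "r < M * N" "dim_vec v = M * N"
  shows "((x \<cdot>\<^sub>m 1\<^sub>m (M * N) - Smat M N t) *\<^sub>v v) $ r = (x - t (r div M)) * v $ r"
proof -
  have "((x \<cdot>\<^sub>m 1\<^sub>m (M * N) - Smat M N t) *\<^sub>v v) $ r
      = (\<Sum>c<M * N. (if r = c then x - t (r div M) else 0) * v $ c)"
    unfolding sI_minus_S by (subst mat_mult_vec_nth[OF assms]) simp_all
  also have "\<dots> = (x - t (r div M)) * v $ r"
    using assms(1) by (simp add: if_distrib[of "\<lambda>a. a * _"] sum.delta cong: if_cong)
  finally show ?thesis .
qed

theorem mainTheorem3:
  fixes q lq lam qlam x :: complex and M N :: nat
    and t :: "nat \<Rightarrow> complex" and B :: "nat \<Rightarrow> complex mat"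
    and y :: "complex \<Rightarrow> complex vec" and xl :: "complex \<Rightarrow> complex"
    and C :: qpath
  assumes q: "0 < cmod q" "cmod q < 1"
    and lq: "exp lq = q" and qlam: "qlam = exp (lam * lq)"
    and xl_branch: "\<forall>z. z \<noteq> 0 \<longrightarrow> (\<exists>l. exp l = z \<and> xl z = exp (lam * l))"
    and xl_shift: "\<forall>z. z \<noteq> 0 \<longrightarrow> xl (q * z) = qlam * xl z"
    and t_distinct: "inj_on t {..<N}"
    and B: "\<forall>i<N. B i \<in> carrier_mat M M"
    and ydim: "\<forall>s. dim_vec (y s) = M"
    and y_sol: "\<forall>s. s \<noteq> 0 \<and> (\<forall>i<N. s \<noteq> t i) \<longrightarrow>
        (\<forall>k<M. (y s $ k - y (q * s) $ k) / ((1 - q) * s) = (\<Sum>i<N. (B i *\<^sub>v y s) $ k / (s - t i)))"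
    and x: "x \<noteq> 0"
    and C_nonzero: "\<forall>(c, e) \<in> set C. endpt_base e \<noteq> 0"
    and C_avoid: "\<forall>(c, e) \<in> set C. \<forall>s \<in> qlattice q e. (\<forall>i<N. s \<noteq> t i) \<and> qpoch q (s / x) \<noteq> 0"
    and conv: "\<forall>j<M * N.
        jconvP q (\<lambda>s. Y0vec M N t y s $ j * qPhi q qlam s x) C \<and>
        jconvP q (\<lambda>s. Y0vec M N t y s $ j * qPhi q qlam s (q * x)) C"
    and bdry: "\<forall>j<M * N.
        bdefP q (\<lambda>s. ((1 - s / (qlam * x)) / (1 - s / x)
            * ((s \<cdot>\<^sub>m 1\<^sub>m (M * N) - Smat M N t) *\<^sub>v Y0vec M N t y s) $ j * qPhi q qlam s x)) C \<and>
        bdryP q (\<lambda>s. ((1 - s / (qlam * x)) / (1 - s / x)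
            * ((s \<cdot>\<^sub>m 1\<^sub>m (M * N) - Smat M N t) *\<^sub>v Y0vec M N t y s) $ j * qPhi q qlam s x)) C = 0"
  shows "let Y = (\<lambda>z. vec (M * N) (\<lambda>j. qEuler q qlam xl C (\<lambda>s. Y0vec M N t y s $ j) z));
             DY = (1 / ((1 - q) * x)) \<cdot>\<^sub>v (Y x - Y (q * x));
             lamb = (1 - qlam) / (1 - q)
         in (x \<cdot>\<^sub>m 1\<^sub>m (M * N) - Smat M N t) *\<^sub>v DY
              = (qlam \<cdot>\<^sub>m Bbig M N B + lamb \<cdot>\<^sub>m 1\<^sub>m (M * N)) *\<^sub>v Y x
            \<and> ((\<forall>i<N. x \<noteq> t i) \<longrightarrow>
                (\<forall>r<M * N. DY $ r = (\<Sum>i<N. (Gmat M N B qlam lamb i *\<^sub>v Y x) $ r / (x - t i))))"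
proof -
  define n where "n = M * N"
  define lamb where "lamb = (1 - qlam) / (1 - q)"
  define Y where "Y = (\<lambda>z. vec (M * N) (\<lambda>j. qEuler q qlam xl C (\<lambda>s. Y0vec M N t y s $ j) z))"
  define DY where "DY = (1 / ((1 - q) * x)) \<cdot>\<^sub>v (Y x - Y (q * x))"
  have q0: "q \<noteq> 0" using q by auto
  have q1: "q \<noteq> 1" using q by auto
  have ql: "qlam \<noteq> 0" using qlam by simp
  have xlq: "xl (q * x) = qlam * xl x" using xl_shift x by auto
  have dimY: "dim_vec (Y z) = M * N" for z unfolding Y_def by simp
  have dimDY: "dim_vec DY = M * N" unfolding DY_def by (simp add: dimY)
  have Yx: "Y z $ j = xl z * (\<Sum>(c, e)\<leftarrow>C. c * jint q (\<lambda>s. Y0vec M N t y s $ j * qPhi q qlam s z) e)"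
    if "j < M * N" for z j
    using that unfolding Y_def qEuler_def jintP_def by simp
  have key: "(x - t (j div M)) * DY $ j
      = qlam * (\<Sum>c<M * N. B (c div M) $$ (j mod M, c mod M) * Y x $ c) + lamb * Y x $ j"
    if j: "j < M * N" for j
  proof -
    define f1 where "f1 = (\<lambda>s. Y0vec M N t y s $ j * qPhi q qlam s x)"
    define f2 where "f2 = (\<lambda>s. Y0vec M N t y s $ j * qPhi q qlam s (q * x))"
    define fc where "fc = (\<lambda>c s. Y0vec M N t y s $ c * qPhi q qlam s x)"
    define w where "w = (\<lambda>c. B (c div M) $$ (j mod M, c mod M))"
    define A where "A = (x - t (j div M)) / ((1 - q) * x)"
    define F where "F = (\<lambda>s. (1 - s / (qlam * x)) / (1 - s / x)
            * ((s \<cdot>\<^sub>m 1\<^sub>m (M * N) - Smat M N t) *\<^sub>v Y0vec M N t y s) $ j * qPhi q qlam s x)"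
    have endp: "A * (jint q f1 e - qlam * jint q f2 e) = qlam * (\<Sum>c<M * N. w c * jint q (fc c) e) + lamb * jint q f1 e - qlam * bval q F e"
      if ce: "(c0, e) \<in> set C" for c0 e
    proof (rule endpoint_identity)
      show "jconv q f1 e" "jconv q f2 e" using conv j ce unfolding f1_def f2_def jconvP_def by auto
      show "\<forall>c<M * N. jconv q (fc c) e" using conv ce unfolding fc_def jconvP_def by auto
      show "bdefined q F e" using bdry j ce unfolding F_def bdefP_def by auto
      show "q \<noteq> 0" by (rule q0)
      show "\<forall>s\<in>qlattice q e. A * ((1 - q) * (f1 s * s) - qlam * ((1 - q) * (f2 s * s))) =
          qlam * (\<Sum>c<M * N. w c * ((1 - q) * (fc c s * s))) + lamb * ((1 - q) * (f1 s * s)) - qlam * (F s - F (q * s))"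
      proof
        fix s assume s: "s \<in> qlattice q e"
        have s0: "s \<noteq> 0" using lattice_nz[OF s q0] C_nonzero ce by auto
        have av: "\<forall>s \<in> qlattice q e. (\<forall>i<N. s \<noteq> t i) \<and> qpoch q (s / x) \<noteq> 0"
          using C_avoid ce by fastforce
        have st: "\<forall>i<N. s \<noteq> t i" and qp: "qpoch q (s / x) \<noteq> 0" using av s by auto
        have "q * s \<in> qlattice q e" by (rule lattice_q[OF s q0])
        then have qst: "\<forall>i<N. q * s \<noteq> t i" using av by auto
        have ys: "\<forall>k<M. (y s $ k - y (q * s) $ k) / ((1 - q) * s) = (\<Sum>i<N. (B i *\<^sub>v y s) $ k / (s - t i))"
          using y_sol s0 st by auto
        show "A * ((1 - q) * (f1 s * s) - qlam * ((1 - q) * (f2 s * s))) =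
          qlam * (\<Sum>c<M * N. w c * ((1 - q) * (fc c s * s))) + lamb * ((1 - q) * (f1 s * s)) - qlam * (F s - F (q * s))"
          unfolding A_def f1_def f2_def fc_def w_def lamb_def
          by (rule pointwise[OF q(2) q0 x ql j B ydim st qst s0 qp ys F_def])
      qed
    qed
    have P: "A * ((\<Sum>(c, e)\<leftarrow>C. c * jint q f1 e) - qlam * (\<Sum>(c, e)\<leftarrow>C. c * jint q f2 e))
     = qlam * (\<Sum>k<M * N. w k * (\<Sum>(c, e)\<leftarrow>C. c * jint q (fc k) e)) + lamb * (\<Sum>(c, e)\<leftarrow>C. c * jint q f1 e)
       - qlam * (\<Sum>(c, e)\<leftarrow>C. c * bval q F e)"
      by (rule path_identity) (use endp in auto)
    have b0: "(\<Sum>(c, e)\<leftarrow>C. c * bval q F e) = 0"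
      using bdry j unfolding F_def bdryP_def by auto
    define J1 where "J1 = (\<Sum>(c, e)\<leftarrow>C. c * jint q f1 e)"
    define J2 where "J2 = (\<Sum>(c, e)\<leftarrow>C. c * jint q f2 e)"
    define Jc where "Jc = (\<lambda>k. \<Sum>(c, e)\<leftarrow>C. c * jint q (fc k) e)"
    have P': "A * (J1 - qlam * J2) = qlam * (\<Sum>k<M * N. w k * Jc k) + lamb * J1"
      using P b0 unfolding J1_def J2_def Jc_def by simp
    have Y1: "Y x $ j = xl x * J1" unfolding Yx[OF j] J1_def f1_def ..
    have Y2: "Y (q * x) $ j = qlam * xl x * J2" unfolding Yx[OF j] J2_def f2_def xlq ..
    have Yc: "Y x $ c = xl x * Jc c" if "c < M * N" for c unfolding Yx[OF that] Jc_def fc_def ..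
    have DYj: "DY $ j = 1 / ((1 - q) * x) * (Y x $ j - Y (q * x) $ j)"
      unfolding DY_def using j dimY by simp
    have "(x - t (j div M)) * DY $ j = xl x * (A * (J1 - qlam * J2))"
      unfolding DYj Y1 Y2 A_def by (simp only: divide_inverse) (simp add: algebra_simps)
    also have "\<dots> = xl x * (qlam * (\<Sum>k<M * N. w k * Jc k) + lamb * J1)" unfolding P' ..
    also have "\<dots> = qlam * (\<Sum>c<M * N. B (c div M) $$ (j mod M, c mod M) * Y x $ c) + lamb * Y x $ j"
    proof -
      have "(\<Sum>c<M * N. B (c div M) $$ (j mod M, c mod M) * Y x $ c) = xl x * (\<Sum>k<M * N. w k * Jc k)"
        unfolding sum_distrib_left w_def by (rule sum.cong) (auto simp: Yc)
      then show ?thesis unfolding Y1 by (simp add: algebra_simps)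
    qed
    finally show ?thesis .
  qed
  have part1: "(x \<cdot>\<^sub>m 1\<^sub>m (M * N) - Smat M N t) *\<^sub>v DY = (qlam \<cdot>\<^sub>m Bbig M N B + lamb \<cdot>\<^sub>m 1\<^sub>m (M * N)) *\<^sub>v Y x"
  proof (rule eq_vecI)
    show "dim_vec ((x \<cdot>\<^sub>m 1\<^sub>m (M * N) - Smat M N t) *\<^sub>v DY) = dim_vec ((qlam \<cdot>\<^sub>m Bbig M N B + lamb \<cdot>\<^sub>m 1\<^sub>m (M * N)) *\<^sub>v Y x)"
      by (simp add: Smat_def Bbig_def)
    fix r assume "r < dim_vec ((qlam \<cdot>\<^sub>m Bbig M N B + lamb \<cdot>\<^sub>m 1\<^sub>m (M * N)) *\<^sub>v Y x)"
    then have r: "r < M * N" by (simp add: Bbig_def)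
    show "((x \<cdot>\<^sub>m 1\<^sub>m (M * N) - Smat M N t) *\<^sub>v DY) $ r = ((qlam \<cdot>\<^sub>m Bbig M N B + lamb \<cdot>\<^sub>m 1\<^sub>m (M * N)) *\<^sub>v Y x) $ r"
      unfolding lhs_entry[OF r dimDY] rhs_entry[OF r dimY] by (rule key[OF r])
  qed
  have part2: "\<forall>r<M * N. DY $ r = (\<Sum>i<N. (Gmat M N B qlam lamb i *\<^sub>v Y x) $ r / (x - t i))"
    if xt: "\<forall>i<N. x \<noteq> t i"
  proof (intro allI impI)
    fix r assume r: "r < M * N"
    have i0: "r div M < N" using r by (simp add: less_mult_imp_div_less mult.commute)
    have "(\<Sum>i<N. (Gmat M N B qlam lamb i *\<^sub>v Y x) $ r / (x - t i))
        = (\<Sum>i<N. if r div M = i then (qlam * (\<Sum>c<M * N. B (c div M) $$ (r mod M, c mod M) * Y x $ c) + lamb * Y x $ r) / (x - t i) else 0)"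
      by (rule sum.cong) (auto simp: G_entry[OF r dimY])
    also have "\<dots> = (qlam * (\<Sum>c<M * N. B (c div M) $$ (r mod M, c mod M) * Y x $ c) + lamb * Y x $ r) / (x - t (r div M))"
      using i0 by (simp add: sum.delta)
    also have "\<dots> = DY $ r"
      unfolding key[OF r, symmetric] using xt i0 by simp
    finally show "DY $ r = (\<Sum>i<N. (Gmat M N B qlam lamb i *\<^sub>v Y x) $ r / (x - t i))" ..
  qed
  show ?thesis
    unfolding Let_def Y_def[symmetric] DY_def[symmetric] lamb_def[symmetric]
    using part1 part2 by blast
qed

end
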